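(* Let $\mathcal{N}\subseteq\mathcal{M}$ be unital $C^*$-algebras with a common unit, and let $p_1,\ldots,p_n\in\mathcal{N}$ be mutually orthogonal projections with $p_1+\cdots+p_n=1$. Let $b\in\mathcal{M}$ and suppose that for each $k$ there exist $x_k\in p_k\mathcal{N}p_k$ and $y_k\in p_k\mathcal{M}p_k$ with $p_kbp_k=x_ky_k-y_kx_k$. Then there exist $d\in\mathcal{N}$ and $z\in\mathcal{M}$ with $b=dz-zd$. *)

theory Defs
  imports Complex_Main
begin

class cstar_algebra = banach + real_normed_algebra_1 +
  fixes scaleC :: "complex \<Rightarrow> 'a \<Rightarrow> 'a"
    and cstar :: "'a \<Rightarrow> 'a"
  assumes scaleC_of_real: "scaleC (complex_of_real r) x = scaleR r x"
    and scaleC_add_right: "scaleC c (x + y) = scaleC c x + scaleC c y"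
    and scaleC_add_left: "scaleC (c + d) x = scaleC c x + scaleC d x"
    and scaleC_scaleC: "scaleC c (scaleC d x) = scaleC (c * d) x"
    and scaleC_one: "scaleC 1 x = x"
    and scaleC_mult_left: "scaleC c x * y = scaleC c (x * y)"
    and scaleC_mult_right: "x * scaleC c y = scaleC c (x * y)"
    and norm_scaleC: "norm (scaleC c x) = cmod c * norm x"
    and cstar_cstar: "cstar (cstar x) = x"
    and cstar_add: "cstar (x + y) = cstar x + cstar y"
    and cstar_mult: "cstar (x * y) = cstar y * cstar x"
    and cstar_scaleC: "cstar (scaleC c x) = scaleC (cnj c) (cstar x)"
    and cstar_identity: "norm (cstar x * x) = (norm x)\<^sup>2"

definition unital_cstar_subalgebra :: "'a::cstar_algebra set \<Rightarrow> bool" where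
  "unital_cstar_subalgebra N \<longleftrightarrow>
     1 \<in> N \<and>
     (\<forall>x\<in>N. \<forall>y\<in>N. x + y \<in> N) \<and>
     (\<forall>x\<in>N. \<forall>y\<in>N. x * y \<in> N) \<and>
     (\<forall>c. \<forall>x\<in>N. scaleC c x \<in> N) \<and>
     (\<forall>x\<in>N. cstar x \<in> N) \<and>
     closed N"

definition is_projection :: "'a::cstar_algebra \<Rightarrow> bool" where
  "is_projection p \<longleftrightarrow> p * p = p \<and> cstar p = p"

definition corner :: "'a::{times} \<Rightarrow> 'a set \<Rightarrow> 'a set" where
  "corner p A = {p * a * p | a. a \<in> A}"

end

theory Submission
  imports Defs
begin

lemma sylv:
  fixes a e w :: "'a::{banach, real_normed_algebra_1}"
  assumes "norm a + norm e < \<bar>\<mu>\<bar>"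
  shows "\<exists>z. scaleR \<mu> z + (a*z - z*e) = w"
proof -
  define T where "T = (\<lambda>u. a*u - u*e)"
  define K where "K = norm a + norm e"
  have K0: "K \<ge> 0" unfolding K_def by simp
  have mu: "\<mu> \<noteq> 0" using assms norm_ge_zero[of a] norm_ge_zero[of e] by linarith
  have TB: "norm (T u) \<le> K * norm u" for u
  proof -
    have "norm (T u) \<le> norm (a*u) + norm (u*e)" unfolding T_def by (rule norm_triangle_ineq4)
    also have "\<dots> \<le> norm a * norm u + norm u * norm e"
      using norm_mult_ineq[of a u] norm_mult_ineq[of u e] by linarith
    finally show ?thesis unfolding K_def by (simp add: algebra_simps)
  qed
  have TP: "norm ((T^^m) w) \<le> K^m * norm w" for m
  proof (induction m)
    case 0 then show ?case by simp
  next
    case (Suc m)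
    have "norm ((T^^Suc m) w) \<le> K * norm ((T^^m) w)" using TB by simp
    also have "\<dots> \<le> K * (K^m * norm w)" using Suc K0 by (rule mult_left_mono)
    finally show ?case by simp
  qed
  have TL: "T (scaleR s v) = scaleR s (T v)" for s v
    unfolding T_def by (simp add: scaleR_diff_right)
  define u where "u m = scaleR ((-1)^m / \<mu>^(Suc m)) ((T^^m) w)" for m
  have un: "norm (u m) \<le> (norm w / \<bar>\<mu>\<bar>) * (K/\<bar>\<mu>\<bar>)^m" for m
  proof -
    have "norm (u m) = norm ((T^^m) w) / \<bar>\<mu>\<bar>^(Suc m)"
      unfolding u_def by (simp add: power_abs abs_mult)
    also have "\<dots> \<le> K^m * norm w / \<bar>\<mu>\<bar>^(Suc m)"
      using TP mu by (simp add: divide_right_mono)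
    also have "\<dots> = (norm w / \<bar>\<mu>\<bar>) * (K/\<bar>\<mu>\<bar>)^m"
      by (simp add: power_divide)
    finally show ?thesis .
  qed
  have r1: "norm (K/\<bar>\<mu>\<bar>) < 1" using assms K0 mu unfolding K_def by simp
  have su: "summable u"
    apply (rule summable_comparison_test'[where g="\<lambda>m. (norm w / \<bar>\<mu>\<bar>) * (K/\<bar>\<mu>\<bar>)^m" and N=0])
    using summable_mult[OF summable_geometric[OF r1]] un by auto
  have Tu: "T (u m) = - scaleR \<mu> (u (Suc m))" for m
    unfolding u_def TL using mu by (simp add: field_simps)
  define z where "z = suminf u"
  have "a * z = (\<Sum>m. a * u m)" unfolding z_def using su by (simp add: suminf_mult)
  moreover have "z * e = (\<Sum>m. u m * e)" unfolding z_def using su by (simp add: suminf_mult2)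
  ultimately have "T z = (\<Sum>m. T (u m))" unfolding T_def
    using suminf_diff[OF summable_mult[OF su, of a] summable_mult2[OF su, of e]] by simp
  also have "\<dots> = (\<Sum>m. - scaleR \<mu> (u (Suc m)))" using Tu by simp
  also have "\<dots> = - scaleR \<mu> (\<Sum>m. u (Suc m))"
    using su by (simp add: suminf_minus suminf_scaleR_right summable_Suc_iff summable_scaleR_right)
  also have "\<dots> = - scaleR \<mu> (z - u 0)" unfolding z_def using su by (simp add: suminf_split_head)
  finally have "T z = - scaleR \<mu> (z - u 0)" .
  then have "scaleR \<mu> z + T z = w" using mu by (simp add: u_def scaleR_diff_right)
  then show ?thesis unfolding T_def by blast
qed

lemma sum_in_N:
  assumes "unital_cstar_subalgebra N" "finite A" "\<forall>k\<in>A. f k \<in> N"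
  shows "sum f A \<in> N"
  using assms(2,3)
proof (induction A rule: finite_induct)
  case empty
  have "scaleC (complex_of_real 0) 1 \<in> N" using assms(1) unfolding unital_cstar_subalgebra_def by blast
  then show ?case by (simp only: scaleC_of_real) simp
next
  case (insert x F)
  then show ?case using assms(1) unfolding unital_cstar_subalgebra_def by simp
qed

theorem lemma3p15:
  fixes N :: "'a::cstar_algebra set"
    and p :: "nat \<Rightarrow> 'a"
    and n :: nat
    and b :: 'a
  assumes "unital_cstar_subalgebra N"
    and "\<forall>k\<in>{1..n}. p k \<in> N \<and> is_projection (p k)"
    and "\<forall>j\<in>{1..n}. \<forall>k\<in>{1..n}. j \<noteq> k \<longrightarrow> p j * p k = 0"
    and "(\<Sum>k=1..n. p k) = 1"
    and "\<forall>k\<in>{1..n}. \<exists>x\<in>corner (p k) N. \<exists>y\<in>corner (p k) UNIV.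
            p k * b * p k = x * y - y * x"
  shows "\<exists>d\<in>N. \<exists>z. b = d * z - z * d"
proof -
  define I where "I = {1..n}"
  have fI: "finite I" unfolding I_def by simp
  have NN: "x \<in> N \<Longrightarrow> y \<in> N \<Longrightarrow> x * y \<in> N" "x \<in> N \<Longrightarrow> y \<in> N \<Longrightarrow> x + y \<in> N"
     "x \<in> N \<Longrightarrow> scaleC c x \<in> N" for x y c
    using assms(1) unfolding unital_cstar_subalgebra_def by auto
  have pN: "k \<in> I \<Longrightarrow> p k \<in> N" for k using assms(2) unfolding I_def by auto
  have pp: "j \<in> I \<Longrightarrow> k \<in> I \<Longrightarrow> p j * p k = (if j = k then p k else 0)" for j k
    using assms(2,3) unfolding I_def is_projection_def by auto
  obtain X Y where XY: "\<forall>k\<in>I. X k \<in> corner (p k) N \<and> Y k \<in> corner (p k) UNIV \<and>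
      p k * b * p k = X k * Y k - Y k * X k"
    using assms(5) unfolding I_def by metis
  have XN: "k \<in> I \<Longrightarrow> X k \<in> N" for k
    using XY pN NN unfolding corner_def by fastforce
  have Xp: "k \<in> I \<Longrightarrow> p k * X k = X k \<and> X k * p k = X k" for k
    using XY pp[of k k] unfolding corner_def by (auto simp: mult.assoc[symmetric]) (metis mult.assoc)
  have Yp: "k \<in> I \<Longrightarrow> p k * Y k * p k = Y k" for k
    using XY pp[of k k] unfolding corner_def by (auto simp: mult.assoc[symmetric]) (metis mult.assoc)
  define L where "L = 1 + (\<Sum>k\<in>I. norm (X k))"
  define lam where "lam k = real k * L" for k
  have Lgt: "j \<in> I \<Longrightarrow> k \<in> I \<Longrightarrow> j \<noteq> k \<Longrightarrow> norm (X j) + norm (X k) < \<bar>lam j - lam k\<bar>" for j k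
  proof -
    assume jk: "j \<in> I" "k \<in> I" "j \<noteq> k"
    have "norm (X j) + norm (X k) = (\<Sum>i\<in>{j,k}. norm (X i))" using jk by simp
    also have "\<dots> \<le> (\<Sum>i\<in>I. norm (X i))" using jk fI by (intro sum_mono2) auto
    also have "\<dots> < L" unfolding L_def by simp
    also have "L \<le> \<bar>real j - real k\<bar> * L"
    proof -
      have "1 \<le> \<bar>real j - real k\<bar>" using jk(3) by linarith
      moreover have "L \<ge> 0" unfolding L_def by (simp add: sum_nonneg add_nonneg_nonneg)
      ultimately show ?thesis using mult_right_mono[of 1 "\<bar>real j - real k\<bar>" L] by simp
    qed
    also have "\<dots> = \<bar>lam j - lam k\<bar>" unfolding lam_def L_def
      by (simp add: left_diff_distrib[symmetric] abs_mult sum_nonneg add_nonneg_nonneg)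
    finally show ?thesis .
  qed
  define D where "D k = X k + scaleR (lam k) (p k)" for k
  define Z0 where "Z0 j k = (SOME z. scaleR (lam j - lam k) z + (X j * z - z * X k) = p j * b * p k)" for j k
  have Z0: "j \<in> I \<Longrightarrow> k \<in> I \<Longrightarrow> j \<noteq> k \<Longrightarrow>
      scaleR (lam j - lam k) (Z0 j k) + (X j * Z0 j k - Z0 j k * X k) = p j * b * p k" for j k
    unfolding Z0_def by (rule someI_ex, rule sylv, rule Lgt)
  define Zf where "Zf j k = (if j = k then Y k else p j * Z0 j k * p k)" for j k
  have Zp: "j \<in> I \<Longrightarrow> k \<in> I \<Longrightarrow> p j * Zf j k * p k = Zf j k" for j k
    unfolding Zf_def using Yp pp[of j j] pp[of k k] by (simp add: mult.assoc[symmetric]) (metis mult.assoc)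
  have Dp: "k \<in> I \<Longrightarrow> p k * D k = D k \<and> D k * p k = D k" for k
    unfolding D_def using Xp pp[of k k] by (simp add: distrib_left distrib_right)
  have ZD: "D j * Zf j k - Zf j k * D k = p j * b * p k" if jk: "j \<in> I" "k \<in> I" for j k
  proof (cases "j = k")
    case True
    have Y1: "p k * Y k = Y k" "Y k * p k = Y k"
      using Yp[of k] pp[of k k] jk True by (metis mult.assoc)+
    have "D j * Zf j k - Zf j k * D k = X k * Y k - Y k * X k"
      unfolding D_def Zf_def using True Y1 by (simp add: distrib_left distrib_right)
    then show ?thesis using XY jk True by simp
  next
    case False
    define W where "W = Z0 j k"
    have f1: "X j * (p j * Q) = X j * Q" "p j * (X j * Q) = X j * Q" "p j * (p j * Q) = p j * Q"
      "Q * (p k * p k) = Q * p k" "Q * (X k * p k) = Q * X k" "Q * (p k * X k) = Q * X k" for Q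
      using Xp[of j] Xp[of k] pp[of j j] pp[of k k] jk by (metis mult.assoc)+
    have f2: "X k * p k = X k" "p j * X j = X j" "p k * p k = p k" "p j * p j = p j"
      using Xp[of j] Xp[of k] pp[of j j] pp[of k k] jk by auto
    have "D j * Zf j k - Zf j k * D k = p j * (scaleR (lam j - lam k) W + (X j * W - W * X k)) * p k"
      unfolding D_def Zf_def W_def[symmetric] using False
      by (simp add: algebra_simps f1 f2 scaleR_diff_left)
    also have "\<dots> = p j * (p j * b * p k) * p k" using Z0[OF jk False] W_def by simp
    also have "\<dots> = p j * b * p k" using f1 f2 by (simp add: mult.assoc)
    finally show ?thesis .
  qed
  define d where "d = (\<Sum>k\<in>I. D k)"
  define z where "z = (\<Sum>i\<in>I. \<Sum>l\<in>I. Zf i l)"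
  have dN: "d \<in> N" unfolding d_def
  proof (rule sum_in_N[OF assms(1) fI], intro ballI)
    fix k assume k: "k \<in> I"
    have "scaleC (complex_of_real (lam k)) (p k) \<in> N" using NN pN k by blast
    then show "D k \<in> N" unfolding D_def using NN XN k by (simp add: scaleC_of_real)
  qed
  have pd: "p j * d = D j \<and> d * p j = D j" if j: "j \<in> I" for j
  proof -
    have "p j * D k = (if k = j then D j else 0) \<and> D k * p j = (if k = j then D j else 0)"
      if k: "k \<in> I" for k
    proof (cases "k = j")
      case True then show ?thesis using Dp j by simp
    next
      case False
      have "p j * D k = (p j * p k) * D k" using Dp[OF k] by (simp add: mult.assoc)
      moreover have "D k * p j = D k * (p k * p j)" using Dp[OF k] by (metis mult.assoc)
      ultimately show ?thesis using pp[OF j k] pp[OF k j] False by simp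
    qed
    then have "p j * d = (\<Sum>k\<in>I. if k = j then D j else 0) \<and> d * p j = (\<Sum>k\<in>I. if k = j then D j else 0)"
      unfolding d_def by (simp add: sum_distrib_left sum_distrib_right)
    then show ?thesis using j fI by simp
  qed
  have pz: "p j * z * p k = Zf j k" if jk: "j \<in> I" "k \<in> I" for j k
  proof -
    have e: "p j * Zf i l * p k = (if i = j then (if l = k then Zf j k else 0) else 0)"
      if il: "i \<in> I" "l \<in> I" for i l
    proof -
      have "p j * Zf i l * p k = (p j * p i) * Zf i l * (p l * p k)"
        using Zp[OF il] by (metis mult.assoc)
      then show ?thesis using pp[OF jk(1) il(1)] pp[OF il(2) jk(2)] Zp[OF il] by auto
    qed
    have "p j * z * p k = (\<Sum>i\<in>I. \<Sum>l\<in>I. p j * Zf i l * p k)"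
      unfolding z_def by (simp add: sum_distrib_left sum_distrib_right mult.assoc)
    also have "\<dots> = (\<Sum>i\<in>I. if i = j then (\<Sum>l\<in>I. if l = k then Zf j k else 0) else 0)"
      using e by (intro sum.cong) auto
    also have "\<dots> = Zf j k" using jk fI by simp
    finally show ?thesis .
  qed
  have dec: "v = (\<Sum>j\<in>I. \<Sum>k\<in>I. p j * v * p k)" for v
  proof -
    have "v = (\<Sum>j\<in>I. p j) * v * (\<Sum>k\<in>I. p k)" using assms(4) unfolding I_def by simp
    then show ?thesis by (simp add: sum_distrib_left sum_distrib_right) (metis (no_types) sum.swap[of "\<lambda>j k. p j * v * p k" I I])
  qed
  have blk: "j \<in> I \<Longrightarrow> k \<in> I \<Longrightarrow> p j * (d * z - z * d) * p k = p j * b * p k" for j k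
  proof -
    assume jk: "j \<in> I" "k \<in> I"
    have "p j * (d * z - z * d) * p k = (p j * d) * z * p k - p j * z * (d * p k)"
      by (simp add: algebra_simps)
    also have "\<dots> = D j * p j * z * p k - p j * z * p k * D k"
      using pd jk Dp by (simp add: mult.assoc)
    also have "\<dots> = D j * Zf j k - Zf j k * D k" using pz jk by (simp add: mult.assoc)
    finally show ?thesis using ZD jk by simp
  qed
  have "b = d * z - z * d"
    by (subst dec[of b], subst dec[of "d * z - z * d"]) (simp add: blk)
  then show ?thesis using dN by blast
qed

end
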